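(* Let $\{\vec L_n\}_{n=1}^6$ be an oriented right-angled hexagon in $\mathbb H^3$ (indices modulo $6$), and for each $n$ let $\delta_n\in\mathbb C/2\pi i\mathbb Z$ be one of the two complex half side-lengths along $\vec L_n$. Then there exists $\varepsilon\in\{1,-1\}$ (depending on the choices of the $\delta_n$) such that \begin{align*} \cosh(\delta_1+\delta_3)\cosh\delta_2&=\varepsilon\cosh(\delta_4+\delta_6)\cosh\delta_5,\\ -\sinh(\delta_1+\delta_3)\cosh\delta_2&=\varepsilon\cosh(\delta_4-\delta_6)\sinh\delta_5,\\ -\cosh(\delta_1-\delta_3)\sinh\delta_2&=\varepsilon\sinh(\delta_4+\delta_6)\cosh\delta_5,\\ \sinh(\delta_1-\delta_3)\sinh\delta_2&=\varepsilon\sinh(\delta_4-\delta_6)\sinh\delta_5. \end{align*}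
   Context: Use the upper half-space model of $\mathbb H^3$ with boundary $\mathbb C\cup\{\infty\}$; $\vec L_{[u,v]}$ denotes the geodesic with endpoints $u,v$ oriented from $u$ to $v$. An oriented right-angled hexagon in $\mathbb H^3$ is a cyclic six-tuple of oriented complete geodesics $\vec L_1,\dots,\vec L_6$ such that $L_n$ and $L_{n+1}$ intersect perpendicularly for each $n$ modulo 6. Complex side-length along $\vec L_n$: let $\eta$ be the unique orientation-preserving isometry with $\eta(\vec L_n)=\vec L_{[0,\infty]}$ and $\eta(\vec L_{n-1})=\vec L_{[-1,1]}$; then $\eta(\vec L_{n+1})=\vec L_{[-z,z]}$ for some $z\in\mathbb C\setminus\{0\}$ and $\sigma_n=\log z\in\mathbb C/2\pi i\mathbb Z$. The two complex half side-lengths along $\vec L_n$ are the two elements $\delta\in\mathbb C/2\pi i\mathbb Z$ with $2\delta=\sigma_n$ (they differ by $\pi i$). *)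

theory Defs
  imports "HOL-Analysis.Analysis"
begin

text \<open>Upper half-space model of hyperbolic 3-space: points of real^3 with third
  coordinate positive; a point (z,t) with z in C, t > 0 is  vector [Re z, Im z, t].\<close>

definition H3 :: "(real^3) set" where
  "H3 = {x. x $ 3 > 0}"

definition hpt :: "complex \<Rightarrow> real \<Rightarrow> real^3" where
  "hpt z t = vector [Re z, Im z, t]"

definition hdist :: "real^3 \<Rightarrow> real^3 \<Rightarrow> real" where
  "hdist x y = arcosh (1 + (norm (x - y))\<^sup>2 / (2 * (x $ 3) * (y $ 3)))"

text \<open>Boundary points: C \<union> {\<infinity>}, with None = \<infinity>.
  An oriented complete geodesic is given by its ordered pair of distinct endpoints
  (start, end).\<close>
type_synonym bpt = "complex option"
type_synonym ogeod = "bpt \<times> bpt"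

definition valid_ogeod :: "ogeod \<Rightarrow> bool" where
  "valid_ogeod L \<longleftrightarrow> fst L \<noteq> snd L"

text \<open>Unit-speed parametrisation of the oriented geodesic from u to v
  (tends to u as s \<rightarrow> -\<infinity> and to v as s \<rightarrow> +\<infinity>).\<close>
definition geod_param :: "ogeod \<Rightarrow> real \<Rightarrow> real^3" where
  "geod_param L s = (case L of
      (None, Some b) \<Rightarrow> hpt b (exp (- s))
    | (Some a, None) \<Rightarrow> hpt a (exp s)
    | (Some a, Some b) \<Rightarrow>
        (let c = (a + b) / 2; r = cmod (b - a) / 2; w = (b - a) / of_real (cmod (b - a))
         in hpt (c + of_real (r * tanh s) * w) (r / cosh s))
    | _ \<Rightarrow> undefined)"

text \<open>Two geodesics intersect perpendicularly: they meet at a point where their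
  tangent vectors are orthogonal (the hyperbolic metric is conformal to the
  Euclidean one, so Euclidean and hyperbolic angles agree).\<close>
definition perp_meet :: "ogeod \<Rightarrow> ogeod \<Rightarrow> bool" where
  "perp_meet L M \<longleftrightarrow> (\<exists>s1 s2. geod_param L s1 = geod_param M s2 \<and>
      vector_derivative (geod_param L) (at s1) \<bullet> vector_derivative (geod_param M) (at s2) = 0)"

definition orient_isom :: "(real^3 \<Rightarrow> real^3) \<Rightarrow> bool" where
  "orient_isom f \<longleftrightarrow> bij_betw f H3 H3 \<and>
     (\<forall>x\<in>H3. \<forall>y\<in>H3. hdist (f x) (f y) = hdist x y) \<and>
     (\<forall>x\<in>H3. \<exists>D. (f has_derivative D) (at x) \<and> det (matrix D) > 0)"

definition maps_ogeod :: "(real^3 \<Rightarrow> real^3) \<Rightarrow> ogeod \<Rightarrow> ogeod \<Rightarrow> bool" where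
  "maps_ogeod f L M \<longleftrightarrow> (\<exists>c. \<forall>s. f (geod_param L s) = geod_param M (s + c))"

definition ra_hexagon :: "(nat \<Rightarrow> ogeod) \<Rightarrow> bool" where
  "ra_hexagon L \<longleftrightarrow> (\<forall>n. L (n + 6) = L n) \<and> (\<forall>n. valid_ogeod (L n)) \<and>
     (\<forall>n. perp_meet (L n) (L (n + 1)))"

text \<open>delta is a complex half side-length along L n (in the hexagon L), given by a
  complex representative of its class in C / 2 pi i Z: 2 delta = log z.\<close>
definition half_side_length :: "(nat \<Rightarrow> ogeod) \<Rightarrow> nat \<Rightarrow> complex \<Rightarrow> bool" where
  "half_side_length L n \<delta> \<longleftrightarrow> (\<exists>\<eta> z. orient_isom \<eta> \<and>
      maps_ogeod \<eta> (L n) (Some 0, None) \<and>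
      maps_ogeod \<eta> (L (n - 1)) (Some (-1), Some 1) \<and>
      z \<noteq> 0 \<and> maps_ogeod \<eta> (L (n + 1)) (Some (-z), Some z) \<and>
      exp (2 * \<delta>) = z)"

end

theory Submission
  imports Defs
begin

definition zc :: "real^3 \<Rightarrow> complex" where "zc x = Complex (x$1) (x$2)"

lemma hpt_nth[simp]: "hpt z t $ 1 = Re z" "hpt z t $ 2 = Im z" "hpt z t $ 3 = t"
  by (simp_all add: hpt_def)

lemma zc_hpt[simp]: "zc (hpt z t) = z"
  by (simp add: zc_def complex_eq_iff)

lemma hpt_zc: "hpt (zc x) (x$3) = x"
  by (simp add: vec_eq_iff forall_3 zc_def)

lemma hpt_eq_iff: "hpt z t = hpt w s \<longleftrightarrow> z = w \<and> t = s"
  by (auto simp: vec_eq_iff forall_3 complex_eq_iff)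

lemma H3_hpt[simp]: "hpt z t \<in> H3 \<longleftrightarrow> t > 0"
  by (simp add: H3_def)

lemma norm_hpt_diff: "(norm (hpt z t - hpt w s))^2 = (cmod (z - w))^2 + (t - s)^2"
  unfolding power2_norm_eq_inner by (simp add: inner_vec_def inner_complex_def sum_3 cmod_power2 power2_eq_square algebra_simps)

lemma cosh_hdist: "x \<in> H3 \<Longrightarrow> y \<in> H3 \<Longrightarrow> cosh (hdist x y) = 1 + (norm (x - y))\<^sup>2 / (2 * (x $ 3) * (y $ 3))"
  unfolding hdist_def H3_def by (intro cosh_arcosh_real) (simp add: divide_nonneg_pos)

lemma hdist_eq_imp: "x \<in> H3 \<Longrightarrow> y \<in> H3 \<Longrightarrow> u \<in> H3 \<Longrightarrow> v \<in> H3 \<Longrightarrow> hdist x y = hdist u v \<Longrightarrow>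
   (norm (x - y))\<^sup>2 / ((x $ 3) * (y $ 3)) = (norm (u - v))\<^sup>2 / ((u $ 3) * (v $ 3))"
  using cosh_hdist[of x y] cosh_hdist[of u v] by (auto simp: field_simps)

lemma comp_D:
  fixes c d c' d' p q r u p' q' r' u' z z' T :: complex
  assumes "p * u - q * r = 1" "p' * u' - q' * r' = 1"
  shows "(c * ((p * z+q) * (r' * z'+u') + p * r' * T) + d * ((r * z+u) * (r' * z'+u') + r * r' * T)) * (c' * ((p' * z'+q') * (r * z+u) + p' * r * T) + d' * ((r * z+u) * (r' * z'+u') + r * r' * T)) + c * c' * T
     = ((r * z+u) * (r' * z'+u') + r * r' * T) * (((c * p+d * r) * z + (c * q+d * u)) * ((c' * p'+d' * r') * z' + (c' * q'+d' * u')) + (c * p+d * r) * (c' * p'+d' * r') * T)"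
  using assms by algebra

lemma alg_core:
  fixes a b c d c' d' p q r u p' q' r' u' z z' T D X X' :: complex
  assumes "p * u - q * r = 1" "p' * u' - q' * r' = 1"
    "D = (r * z+u) * (r' * z'+u') + r * r' * T" "D \<noteq> 0"
    "X = (p * z+q) * (r' * z'+u') + p * r' * T" "X' = (p' * z'+q') * (r * z+u) + p' * r * T"
  shows "(c * (X/D) + d) * (c' * (X'/D) + d') + c * c' * (T/D^2) = (((c * p+d * r) * z + (c * q+d * u)) * ((c' * p'+d' * r') * z' + (c' * q'+d' * u')) + (c * p+d * r) * (c' * p'+d' * r') * T)/D"
proof -
  have "(c * (X/D) + d) * (c' * (X'/D) + d') + c * c' * (T/D^2) = ((c * X + d * D) * (c' * X' + d' * D) + c * c' * T)/D^2"
    using assms(4) by (simp add: field_simps power2_eq_square)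
  also have "(c * X + d * D) * (c' * X' + d' * D) + c * c' * T = D * (((c * p+d * r) * z + (c * q+d * u)) * ((c' * p'+d' * r') * z' + (c' * q'+d' * u')) + (c * p+d * r) * (c' * p'+d' * r') * T)"
    unfolding assms(3,5,6) by (rule comp_D[OF assms(1,2)])
  finally show ?thesis using assms(4) by (simp add: power2_eq_square)
qed

type_synonym cm = "complex \<times> complex \<times> complex \<times> complex"

definition cdet :: "cm \<Rightarrow> complex" where "cdet M = (case M of (a,b,c,d) \<Rightarrow> a * d - b * c)"
definition mmul :: "cm \<Rightarrow> cm \<Rightarrow> cm" where
  "mmul M N = (case M of (a,b,c,d) \<Rightarrow> case N of (p,q,r,u) \<Rightarrow> (a * p+b * r, a * q+b * u, c * p+d * r, c * q+d * u))"

definition pm :: "cm \<Rightarrow> real^3 \<Rightarrow> real^3" where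
  "pm M x = (case M of (a,b,c,d) \<Rightarrow> let z = zc x; t = x$3; D = (cmod (c * z+d))^2 + (cmod c)^2 * t^2 in
     hpt (((a * z+b) * cnj(c * z+d) + a * cnj c * of_real(t^2))/of_real D) (t/D))"

lemma Dpos: assumes "a * d - b * c = 1" "t > 0" shows "(cmod (c * z+d))^2 + (cmod c)^2 * t^2 > 0"
proof (cases "c = 0")
  case True
  then have "d \<noteq> 0" using assms by auto
  then show ?thesis using True by simp
next
  case False
  then have "(cmod c)^2 * t^2 > 0" using assms by simp
  then show ?thesis by (smt (verit) zero_le_power2)
qed

lemma pm_simp: "pm (a,b,c,d) (hpt z t) = (let D = (cmod (c * z+d))^2 + (cmod c)^2 * t^2 in
     hpt (((a * z+b) * cnj(c * z+d) + a * cnj c * of_real(t^2))/of_real D) (t/D))"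
  by (simp add: pm_def)

lemma pm_H3: assumes "cdet M = 1" "x \<in> H3" shows "pm M x \<in> H3"
proof -
  obtain a b c d where M: "M = (a,b,c,d)" by (cases M) auto
  have "(cmod (c * zc x+d))^2 + (cmod c)^2 * (x$3)^2 > 0"
    using assms by (intro Dpos) (auto simp: M cdet_def H3_def)
  then show ?thesis using assms by (auto simp: M pm_def Let_def H3_def)
qed

lemma cnsq: "(of_real (cmod w))^2 = w * cnj w"
  using complex_norm_square[of w] by simp

lemma pm_comp: assumes "cdet M = 1" "cdet N = 1" "x \<in> H3"
  shows "pm M (pm N x) = pm (mmul M N) x"
proof -
  obtain a b c d where M: "M = (a,b,c,d)" by (cases M) auto
  obtain p q r u where N: "N = (p,q,r,u)" by (cases N) auto
  define z where "z = zc x"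
  define t where "t = x$3"
  have x: "x = hpt z t" unfolding z_def t_def by (simp add: hpt_zc)
  have t: "t > 0" using assms(3) by (simp add: t_def H3_def)
  have dM: "a * d - b * c = 1" and dN: "p * u - q * r = 1" using assms by (auto simp: M N cdet_def)
  have dM': "cnj a * cnj d - cnj b * cnj c = 1" and dN': "cnj p * cnj u - cnj q * cnj r = 1"
    using arg_cong[OF dM, of cnj] arg_cong[OF dN, of cnj] by simp_all
  define DN where "DN = (cmod (r * z+u))^2 + (cmod r)^2 * t^2"
  define XN where "XN = (p * z+q) * cnj(r * z+u) + p * cnj r * of_real(t^2)"
  have DNpos: "DN > 0" unfolding DN_def by (rule Dpos[OF dN t])
  define T where "T = (of_real (t^2) :: complex)"
  have DNc: "(of_real DN :: complex) = (r * z+u) * (cnj r * cnj z+cnj u) + r * cnj r * T"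
    by (simp add: DN_def T_def cnsq)
  have XNc: "XN = (p * z+q) * (cnj r * cnj z+cnj u) + p * cnj r * T"
    by (simp add: XN_def T_def)
  have XNc': "cnj XN = (cnj p * cnj z+cnj q) * (r * z+u) + cnj p * r * T"
    by (simp add: XN_def T_def)
  have y: "pm N x = hpt (XN / of_real DN) (t/DN)"
    by (simp add: x N pm_simp DN_def XN_def Let_def)
  define zy where "zy = XN / of_real DN"
  have czy: "cnj zy = cnj XN / of_real DN" by (simp add: zy_def)
  have Ty: "of_real ((t/DN)^2) = T / (of_real DN)^2" by (simp add: T_def power_divide)
  define DM where "DM = (cmod (c * zy+d))^2 + (cmod c)^2 * (t/DN)^2"
  define XM where "XM = (a * zy+b) * cnj(c * zy+d) + a * cnj c * of_real((t/DN)^2)"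
  define Dmn where "Dmn = (cmod ((c * p+d * r) * z+(c * q+d * u)))^2 + (cmod (c * p+d * r))^2 * t^2"
  define Xmn where "Xmn = ((a * p+b * r) * z+(a * q+b * u)) * cnj((c * p+d * r) * z+(c * q+d * u)) + (a * p+b * r) * cnj (c * p+d * r) * of_real(t^2)"
  have DN0: "(of_real DN :: complex) \<noteq> 0" using DNpos by simp
  have "(of_real DM :: complex) = (c * zy+d) * (cnj c * cnj zy+cnj d) + c * cnj c * of_real((t/DN)^2)"
    by (simp add: DM_def cnsq)
  also have "\<dots> = (c * (XN/of_real DN) + d) * (cnj c * (cnj XN/of_real DN) + cnj d) + c * cnj c * (T/(of_real DN)^2)"
    by (simp add: czy zy_def T_def power_divide)
  also have "\<dots> = (((c * p+d * r) * z + (c * q+d * u)) * ((cnj c * cnj p+cnj d * cnj r) * cnj z + (cnj c * cnj q+cnj d * cnj u)) + (c * p+d * r) * (cnj c * cnj p+cnj d * cnj r) * T)/of_real DN"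
    by (rule alg_core[OF dN dN' DNc DN0 XNc XNc'])
  also have "\<dots> = of_real Dmn / of_real DN"
    by (simp add: Dmn_def cnsq T_def)
  finally have DMe: "(of_real DM :: complex) = of_real Dmn / of_real DN" .
  then have DMr: "DM = Dmn / DN" by (metis of_real_divide of_real_eq_iff)
  have "XM = (a * (XN/of_real DN) + b) * (cnj c * (cnj XN/of_real DN) + cnj d) + a * cnj c * (T/(of_real DN)^2)"
    by (simp add: XM_def czy zy_def T_def power_divide)
  also have "\<dots> = (((a * p+b * r) * z + (a * q+b * u)) * ((cnj c * cnj p+cnj d * cnj r) * cnj z + (cnj c * cnj q+cnj d * cnj u)) + (a * p+b * r) * (cnj c * cnj p+cnj d * cnj r) * T)/of_real DN"
    by (rule alg_core[OF dN dN' DNc DN0 XNc XNc'])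
  also have "\<dots> = Xmn / of_real DN"
    by (simp add: Xmn_def T_def)
  finally have XMe: "XM = Xmn / of_real DN" .
  have lhs: "pm M (pm N x) = hpt (XM / of_real DM) ((t/DN)/DM)"
    by (simp add: y M pm_simp DM_def XM_def zy_def Let_def)
  have rhs: "pm (mmul M N) x = hpt (Xmn / of_real Dmn) (t/Dmn)"
    by (simp add: x M N mmul_def pm_simp Dmn_def Xmn_def Let_def)
  have DMpos: "DM > 0" unfolding DM_def by (rule Dpos[OF dM]) (use t DNpos in simp)
  have Dmn_eq: "Dmn = DM * DN" using DMr DNpos by simp
  show ?thesis unfolding lhs rhs hpt_eq_iff XMe Dmn_eq
    by (simp add: divide_divide_eq_left mult.commute)
qed

lemma pm_id: assumes "cdet M = 1" "\<forall>y\<in>H3. pm M y = y"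
  shows "M = (1,0,0,1) \<or> M = (-1,0,0,-1)"
proof -
  obtain a b c d where M: "M = (a,b,c,d)" by (cases M) auto
  have det: "a*d - b*c = 1" using assms by (simp add: M cdet_def)
  have e1: "pm M (hpt 0 1) = hpt 0 1" and e2: "pm M (hpt 0 2) = hpt 0 2" and e3: "pm M (hpt 1 1) = hpt 1 1"
    using assms(2) by auto
  define D1 where "D1 = (cmod d)^2 + (cmod c)^2"
  define D2 where "D2 = (cmod d)^2 + (cmod c)^2 * 4"
  have "D1 > 0" using Dpos[OF det, of 1 0] by (simp add: D1_def)
  have "hpt ((b * cnj d + a * cnj c) / of_real D1) (1 / D1) = hpt 0 1"
    using e1 by (simp add: M pm_simp Let_def D1_def)
  then have h1: "1 / D1 = 1" and z1: "(b * cnj d + a * cnj c) / of_real D1 = 0"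
    unfolding hpt_eq_iff by auto
  have h2: "2 / D2 = 2" using e2 by (simp add: M pm_simp Let_def hpt_eq_iff D2_def)
  have "D2 \<noteq> 0" using h2 by auto
  have "D1 = 1" using h1 \<open>D1 > 0\<close> by simp
  moreover have "D2 = 1" using h2 \<open>D2 \<noteq> 0\<close> by (simp add: field_simps)
  ultimately have "(cmod c)^2 = 0" unfolding D1_def D2_def by linarith
  then have c0: "c = 0" by simp
  then have "(cmod d)^2 = 1" using \<open>D1 = 1\<close> by (simp add: D1_def)
  then have cd1: "d * cnj d = 1" using cnsq[of d] by (metis of_real_1 of_real_power)
  have b0: "b = 0" using z1 \<open>D1 = 1\<close> cd1 c0 by auto
  have ad: "a * d = 1" using det c0 by simp
  have "pm M (hpt 1 1) = hpt (a * cnj d) 1"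
    using c0 b0 \<open>(cmod d)^2 = 1\<close> by (simp add: M pm_simp Let_def)
  then have "a * cnj d = 1" using e3 by (simp add: hpt_eq_iff)
  then have "cnj d = d" using ad by (metis mult_cancel_left mult_zero_left zero_neq_one)
  then have "d \<in> \<real>" using Reals_cnj_iff by blast
  then obtain r where r: "d = of_real r" by (auto elim: Reals_cases)
  then have "r * r = 1" using cd1 by (metis complex_cnj_complex_of_real of_real_eq_1_iff of_real_mult)
  then have "r = 1 \<or> r = -1" by (metis mult_cancel_left1 square_eq_1_iff)
  then show ?thesis using r ad b0 c0 M
    by (auto simp: field_simps) (metis add.inverse_inverse mult_minus1 mult_minus_right mult.commute)+
qed

definition good :: "(real^3 \<Rightarrow> real^3) \<Rightarrow> bool" where
  "good f \<longleftrightarrow> (\<forall>x\<in>H3. f x \<in> H3) \<and> (\<forall>x\<in>H3. \<forall>y\<in>H3. hdist (f x) (f y) = hdist x y) \<and>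
     (\<forall>x\<in>H3. \<exists>D. (f has_derivative D) (at x) \<and> det (matrix D) > 0)"

lemma open_H3: "open H3"
  unfolding H3_def by (intro open_Collect_less continuous_intros)

lemma good_comp: assumes "good f" "good g" shows "good (f \<circ> g)"
  unfolding good_def
proof (intro conjI ballI)
  fix x assume x: "x \<in> H3"
  show "(f \<circ> g) x \<in> H3" using assms x by (simp add: good_def)
  fix y assume y: "y \<in> H3"
  show "hdist ((f \<circ> g) x) ((f \<circ> g) y) = hdist x y" using assms x y by (simp add: good_def)
next
  fix x assume x: "x \<in> H3"
  obtain Dg where Dg: "(g has_derivative Dg) (at x)" "det (matrix Dg) > 0" using assms(2) x by (auto simp: good_def)
  have "g x \<in> H3" using assms(2) x by (auto simp: good_def)
  then obtain Df where Df: "(f has_derivative Df) (at (g x))" "det (matrix Df) > 0" using assms(1) by (auto simp: good_def)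
  have "((f \<circ> g) has_derivative (Df \<circ> Dg)) (at x)"
    using has_derivative_compose[OF Dg(1) Df(1)] by (simp add: o_def)
  moreover have "matrix (Df \<circ> Dg) = matrix Df ** matrix Dg"
    using Dg(1) Df(1) by (intro matrix_compose) (auto dest: has_derivative_linear)
  ultimately show "\<exists>D. ((f \<circ> g) has_derivative D) (at x) \<and> det (matrix D) > 0"
    using Df Dg by (auto simp: det_mul)
qed

lemma good_cong: assumes "good f" "\<And>x. x \<in> H3 \<Longrightarrow> f x = g x" shows "good g"
  unfolding good_def
proof (intro conjI ballI)
  fix x assume x: "x \<in> H3"
  show "g x \<in> H3" using assms x by (auto simp: good_def)
  fix y assume y: "y \<in> H3"
  show "hdist (g x) (g y) = hdist x y" using assms x y by (auto simp: good_def)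
next
  fix x assume x: "x \<in> H3"
  obtain D where D: "(f has_derivative D) (at x)" "det (matrix D) > 0" using assms(1) x by (auto simp: good_def)
  have "(g has_derivative D) (at x)"
    by (rule has_derivative_transform_within_open[OF D(1) open_H3 x]) (use assms(2) in auto)
  then show "\<exists>D. (g has_derivative D) (at x) \<and> det (matrix D) > 0" using D by auto
qed

definition sc :: "complex \<Rightarrow> real^3 \<Rightarrow> real^3" where
  "sc l x = hpt (l * zc x) (cmod l * x$3)"

lemma sc_linear: "linear (sc l)"
  by (rule linearI) (simp_all add: sc_def vec_eq_iff forall_3 zc_def algebra_simps)

lemma axis_nth3: "axis (1::3) (1::real) $ 1 = 1" "axis (1::3) (1::real) $ 2 = 0" "axis (1::3) (1::real) $ 3 = 0"
  "axis (2::3) (1::real) $ 1 = 0" "axis (2::3) (1::real) $ 2 = 1" "axis (2::3) (1::real) $ 3 = 0"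
  "axis (3::3) (1::real) $ 1 = 0" "axis (3::3) (1::real) $ 2 = 0" "axis (3::3) (1::real) $ 3 = 1"
  by (simp_all add: axis_def)

lemma det_sc: "det (matrix (sc l)) = (cmod l)^3"
proof -
  have "det (matrix (sc l)) = cmod l * ((Re l)^2 + (Im l)^2)"
    by (simp add: det_3 matrix_def sc_def zc_def axis_nth3 power2_eq_square algebra_simps)
  also have "\<dots> = (cmod l)^3" using cmod_power2[of l] by (simp add: power3_eq_cube power2_eq_square)
  finally show ?thesis .
qed

lemma good_sc: assumes "l \<noteq> 0" shows "good (sc l)"
  unfolding good_def
proof (intro conjI ballI)
  fix x assume x: "x \<in> H3"
  show "sc l x \<in> H3" using x assms by (simp add: sc_def H3_def)
  fix y assume y: "y \<in> H3"
  have "(norm (sc l x - sc l y))^2 = (cmod (l * zc x - l * zc y))^2 + (cmod l * x$3 - cmod l * y$3)^2"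
    unfolding sc_def by (rule norm_hpt_diff)
  also have "\<dots> = (cmod l)^2 * ((cmod (zc x - zc y))^2 + (x$3 - y$3)^2)"
    unfolding right_diff_distrib[symmetric] norm_mult power_mult_distrib by (simp add: distrib_left)
  also have "(cmod (zc x - zc y))^2 + (x$3 - y$3)^2 = (norm (x - y))^2"
    using norm_hpt_diff[of "zc x" "x$3" "zc y" "y$3"] by (simp add: hpt_zc)
  finally have N: "(norm (sc l x - sc l y))^2 = (cmod l)^2 * (norm (x - y))^2" .
  have "(norm (sc l x - sc l y))^2 / (2 * (sc l x $ 3) * (sc l y $ 3)) = (norm (x - y))^2 / (2 * x$3 * y$3)"
    unfolding N using assms by (simp add: sc_def power2_eq_square)
  then show "hdist (sc l x) (sc l y) = hdist x y"
    by (simp add: hdist_def)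
next
  fix x assume x: "x \<in> H3"
  have "(sc l has_derivative sc l) (at x)" by (rule linear_imp_has_derivative[OF sc_linear])
  then show "\<exists>D. (sc l has_derivative D) (at x) \<and> det (matrix D) > 0"
    using assms by (auto simp: det_sc)
qed

definition tr :: "complex \<Rightarrow> real^3 \<Rightarrow> real^3" where
  "tr b x = x + hpt b 0"

lemma good_tr: "good (tr b)"
  unfolding good_def
proof (intro conjI ballI)
  fix x assume x: "x \<in> H3"
  show "tr b x \<in> H3" using x by (simp add: tr_def H3_def)
  fix y show "hdist (tr b x) (tr b y) = hdist x y" by (simp add: tr_def hdist_def)
next
  fix x assume x: "x \<in> H3"
  have "(tr b has_derivative id) (at x)" unfolding tr_def id_def
    by (auto intro!: derivative_eq_intros)
  then show "\<exists>D. (tr b has_derivative D) (at x) \<and> det (matrix D) > 0"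
    by (auto simp: matrix_id_mat_1)
qed

definition sg :: "real^3 \<Rightarrow> real^3" where "sg x = vector [x$1, -(x$2), x$3]"

lemma sg_linear: "linear sg"
  by (rule linearI) (simp_all add: sg_def vec_eq_iff forall_3)

lemma sg_inner: "sg x \<bullet> sg y = x \<bullet> y"
  by (simp add: sg_def inner_vec_def sum_3)

definition vinv :: "real^3 \<Rightarrow> real^3" where
  "vinv x = inverse (x \<bullet> x) *\<^sub>R sg x"

lemma H3_inner_pos: "x \<in> H3 \<Longrightarrow> x \<bullet> x > 0"
  by (auto simp: H3_def)

lemma vinv_hdist: assumes x: "x \<in> H3" and y: "y \<in> H3" shows "hdist (vinv x) (vinv y) = hdist x y"
proof -
  define a where "a = x \<bullet> x"
  define b where "b = y \<bullet> y"
  define c where "c = x \<bullet> y"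
  have a: "a > 0" and b: "b > 0" using H3_inner_pos x y by (auto simp: a_def b_def)
  have "(norm (vinv x - vinv y))^2 = (vinv x - vinv y) \<bullet> (vinv x - vinv y)" by (simp add: power2_norm_eq_inner)
  also have "\<dots> = inverse a * inverse a * a - 2 * inverse a * inverse b * c + inverse b * inverse b * b"
    by (simp add: vinv_def inner_diff_left inner_diff_right sg_inner a_def b_def c_def inner_commute algebra_simps)
  also have "\<dots> = (a - 2 * c + b) / (a * b)" using a b by (simp add: field_simps)
  also have "a - 2 * c + b = (norm (x - y))^2"
    by (simp add: power2_norm_eq_inner inner_diff_left inner_diff_right a_def b_def c_def inner_commute)
  finally have N: "(norm (vinv x - vinv y))^2 = (norm (x - y))^2 / (a * b)" .
  have h: "vinv x $ 3 = x $ 3 / a" "vinv y $ 3 = y $ 3 / b" by (simp_all add: vinv_def sg_def a_def b_def divide_inverse mult.commute)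
  have "(norm (vinv x - vinv y))^2 / (2 * (vinv x $ 3) * (vinv y $ 3)) = (norm (x - y))^2 / (2 * x$3 * y$3)"
    unfolding N h using a b by (simp add: field_simps)
  then show ?thesis by (simp add: hdist_def)
qed

lemma vinv_deriv: assumes "x \<bullet> x \<noteq> 0"
  shows "(vinv has_derivative (\<lambda>h. inverse (x \<bullet> x) *\<^sub>R sg h + (- (inverse (x \<bullet> x) * (x \<bullet> h + h \<bullet> x) * inverse (x \<bullet> x))) *\<^sub>R sg x)) (at x)"
proof -
  have d1: "((\<lambda>y. y \<bullet> y) has_derivative (\<lambda>h. x \<bullet> h + h \<bullet> x)) (at x)"
    by (rule has_derivative_inner[OF has_derivative_ident has_derivative_ident])
  note d2 = Deriv.has_derivative_inverse[OF assms d1]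
  have d3: "(sg has_derivative sg) (at x)" by (rule linear_imp_has_derivative[OF sg_linear])
  show ?thesis unfolding vinv_def using has_derivative_scaleR[OF d2 d3] by simp
qed

lemma det_vinv: assumes "x \<bullet> x \<noteq> 0"
  shows "det (matrix (\<lambda>h. inverse (x \<bullet> x) *\<^sub>R sg h + (- (inverse (x \<bullet> x) * (x \<bullet> h + h \<bullet> x) * inverse (x \<bullet> x))) *\<^sub>R sg x)) = inverse (x \<bullet> x) ^ 3"
proof -
  define a where "a = x$1"
  define b where "b = x$2"
  define c where "c = x$3"
  have s: "x \<bullet> x = a*a + b*b + c*c" by (simp add: inner_vec_def sum_3 a_def b_def c_def)
  have "x \<bullet> x \<noteq> 0" by fact
  then have s0: "a*a + b*b + c*c \<noteq> 0" using s by simp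
  have inn: "\<And>j. x \<bullet> axis j 1 = x $ j" "\<And>j. axis j 1 \<bullet> x = x $ j"
    by (simp_all add: inner_axis inner_commute[of "axis _ _"])
  define k where "k = inverse (a*a + b*b + c*c)"
  have k: "k * (a*a + b*b + c*c) = 1" using s0 by (simp add: k_def)
  have ik: "inverse (x \<bullet> x) = k" by (simp add: s k_def)
  show ?thesis
    unfolding ik
    apply (simp add: det_3 matrix_def sg_def inn axis_nth3 flip: a_def b_def c_def)
    using k apply algebra
    done
qed

lemma good_vinv: "good vinv"
  unfolding good_def
proof (intro conjI ballI)
  fix x assume x: "x \<in> H3"
  have "x \<bullet> x > 0" using H3_inner_pos[OF x] .
  then show "vinv x \<in> H3" using x by (simp add: vinv_def sg_def H3_def)
  fix y assume y: "y \<in> H3"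
  show "hdist (vinv x) (vinv y) = hdist x y" by (rule vinv_hdist[OF x y])
next
  fix x assume x: "x \<in> H3"
  have "x \<bullet> x > 0" using H3_inner_pos[OF x] .
  then show "\<exists>D. (vinv has_derivative D) (at x) \<and> det (matrix D) > 0"
    using vinv_deriv[of x] det_vinv[of x] by (intro exI[of _ "(\<lambda>h. inverse (x \<bullet> x) *\<^sub>R sg h + (- (inverse (x \<bullet> x) * (x \<bullet> h + h \<bullet> x) * inverse (x \<bullet> x))) *\<^sub>R sg x)"]) auto
qed

lemma pm_tr: "pm (1,b,0,1) x = tr b x"
  by (simp add: pm_def tr_def Let_def vec_eq_iff forall_3 zc_def)

lemma pm_sc: assumes "m \<noteq> 0" shows "pm (m,0,0,inverse m) x = sc (m^2) x"
proof -
  have raw: "pm (m,0,0,inverse m) x = hpt (m * zc x * cnj (inverse m) / of_real ((cmod (inverse m))^2)) (x$3 / (cmod (inverse m))^2)"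
    by (simp add: pm_def Let_def)
  have e: "cnj (inverse m) / of_real ((cmod (inverse m))^2) = m"
    using assms complex_norm_square[of "inverse m"] by (simp add: field_simps)
  have e2: "x$3 / (cmod (inverse m))^2 = cmod (m^2) * x$3"
    using assms by (simp add: norm_inverse norm_power power_inverse divide_inverse)
  have "m * zc x * cnj (inverse m) / of_real ((cmod (inverse m))^2) = m^2 * zc x"
    using e by (metis (no_types, lifting) mult.assoc mult.commute power2_eq_square times_divide_eq_right)
  then show ?thesis unfolding raw e2 sc_def by simp
qed

lemma pm_vinv: assumes "x \<bullet> x \<noteq> 0" shows "pm (0,\<i>,\<i>,0) x = vinv x"
proof -
  have s: "x \<bullet> x = (cmod (zc x))^2 + (x$3)^2" by (simp add: inner_vec_def sum_3 zc_def cmod_power2) (simp add: power2_eq_square)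
  have raw: "pm (0,\<i>,\<i>,0) x = hpt (cnj (zc x) / of_real (x \<bullet> x)) (x$3 / (x \<bullet> x))"
    unfolding s by (simp add: pm_def Let_def norm_mult)
  show ?thesis unfolding raw
    using assms by (simp add: vinv_def sg_def vec_eq_iff forall_3 zc_def divide_inverse mult.commute hpt_def power2_eq_square)
qed

lemma cdet_mmul: "cdet (mmul M N) = cdet M * cdet N"
  by (cases M; cases N) (simp add: cdet_def mmul_def algebra_simps)

lemma good_pm_mul: assumes "cdet M = 1" "cdet N = 1" "good (pm M)" "good (pm N)"
  shows "good (pm (mmul M N))"
  by (rule good_cong[OF good_comp[OF assms(3,4)]]) (simp add: pm_comp[OF assms(1,2)])

lemma good_pm_tr: "good (pm (1,b,0,1))"
  by (rule good_cong[OF good_tr]) (simp add: pm_tr)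

lemma good_pm_sc: "m \<noteq> 0 \<Longrightarrow> good (pm (m,0,0,inverse m))"
  by (rule good_cong[OF good_sc, of "m^2"]) (simp_all add: pm_sc)

lemma good_pm_vinv: "good (pm (0,\<i>,\<i>,0))"
  by (rule good_cong[OF good_vinv]) (metis H3_inner_pos less_irrefl pm_vinv)

definition qq :: complex where "qq = \<i> / of_real (sqrt 2)"
definition Qm :: cm where "Qm = (qq, qq, qq, -qq)"

lemma Qm_prod: "Qm = mmul (1,1,0,1) (mmul (of_real (sqrt 2),0,0,inverse (of_real (sqrt 2))) (mmul (0,\<i>,\<i>,0) (1,-1,0,1)))"
proof -
  have "of_real (sqrt 2) - inverse (of_real (sqrt 2)) = (inverse (of_real (sqrt 2)) :: complex)"
    by (simp add: field_simps flip: of_real_mult)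
  then show ?thesis
    by (simp add: Qm_def qq_def mmul_def divide_inverse algebra_simps)
qed

lemma cdet_Qm: "cdet Qm = 1"
  by (simp add: Qm_def qq_def cdet_def field_simps flip: of_real_mult)

lemma good_Qm: "good (pm Qm)"
  unfolding Qm_prod
  by (intro good_pm_mul good_pm_tr good_pm_sc good_pm_vinv) (simp_all only: cdet_mmul, simp_all add: cdet_def)

lemma geod_up: "geod_param (Some 0, None) s = hpt 0 (exp s)"
  by (simp add: geod_param_def)

lemma geod_sym: assumes "z \<noteq> 0"
  shows "geod_param (Some (-z), Some z) s = hpt (of_real (tanh s) * z) (cmod z / cosh s)"
proof -
  have c2: "cmod (z - - z) = 2 * cmod z" by (simp add: norm_mult flip: mult_2)
  have "of_real (cmod z * tanh s) * ((z - - z) / of_real (2 * cmod z)) = of_real (tanh s) * z"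
    using assms by (simp add: field_simps)
  then show ?thesis using assms by (simp add: geod_param_def Let_def c2)
qed

lemma geod_unit: "geod_param (Some (-1), Some 1) s = hpt (of_real (tanh s)) (1 / cosh s)"
  using geod_sym[of 1 s] by simp

lemma th: "tanh (s::real) = ((exp s)^2 - 1) / ((exp s)^2 + 1)"
proof -
  define E where "E = exp s"
  have E: "E > 0" by (simp add: E_def)
  have "tanh s = (E - inverse E) / (E + inverse E)" by (simp add: tanh_altdef exp_minus E_def)
  also have "\<dots> = (E^2 - 1) / (E^2 + 1)"
  proof -
    have "E + inverse E = (E^2 + 1) / E" "E - inverse E = (E^2 - 1) / E" using E by (simp_all add: field_simps power2_eq_square)
    then show ?thesis using E by simp
  qed
  finally show ?thesis by (simp add: E_def)
qed

lemma ch: "cosh (s::real) = ((exp s)^2 + 1) / (2 * exp s)"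
proof -
  define E where "E = exp s"
  have E: "E > 0" by (simp add: E_def)
  have "cosh s = (E + inverse E) / 2" by (simp add: cosh_def exp_minus E_def)
  also have "E + inverse E = (E^2 + 1) / E" using E by (simp_all add: field_simps power2_eq_square)
  finally show ?thesis by (simp add: E_def)
qed

lemma half_div: "(A::complex) / 2 / of_real (B / 2) = A / of_real B"
  by (cases "B = 0") (simp_all add: field_simps)

lemma four_div: "(F::real) \<noteq> 0 \<Longrightarrow> 4*F/F^2 = 4/F"
  by (simp add: power2_eq_square)

lemma frac_aux1: "(F::real) \<noteq> 0 \<Longrightarrow> (p/F)*(p/F) - 1 + (q/F)^2 = (p*p - F*F + q*q)/F^2"
  by (simp add: field_simps power2_eq_square)

lemma frac_aux2: "(F::real) \<noteq> 0 \<Longrightarrow> (p/F - 1)^2 + (q/F)^2 = ((p-F)*(p-F) + q*q)/F^2"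
  by (simp add: field_simps power2_eq_square)

lemma qq_sq: "qq * cnj qq = 1/2" "(cmod qq)^2 = 1/2"
  by (simp_all add: qq_def field_simps norm_divide flip: of_real_mult)

lemma pm_Qm: "pm Qm (hpt z t) = hpt (((z+1)*cnj(z-1) + of_real(t^2)) / of_real ((cmod(z-1))^2 + t^2)) (2*t/((cmod(z-1))^2+t^2))"
proof -
  have D: "(cmod (qq * z + - qq))^2 + (cmod qq)^2 * t^2 = ((cmod(z-1))^2 + t^2) / 2"
  proof -
    have "qq * z + - qq = qq * (z - 1)" by (simp add: algebra_simps)
    then show ?thesis by (simp add: norm_mult power_mult_distrib qq_sq)
  qed
  have X: "(qq * z + qq) * cnj (qq * z + - qq) + qq * cnj qq * of_real (t^2) = ((z+1)*cnj(z-1) + of_real(t^2)) / 2"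
  proof -
    have "(qq * z + qq) * cnj (qq * z + - qq) = (qq * cnj qq) * ((z+1) * cnj (z-1))"
      by (simp add: algebra_simps)
    then show ?thesis by (simp add: qq_sq field_simps)
  qed
  have e: "((z+1)*cnj(z-1) + of_real(t^2)) / 2 / of_real (((cmod(z-1))^2 + t^2) / 2) = ((z+1)*cnj(z-1) + of_real(t^2)) / of_real ((cmod(z-1))^2 + t^2)"
    by (rule half_div)
  have e': "t / (((cmod(z-1))^2 + t^2) / 2) = 2*t/((cmod(z-1))^2+t^2)" by simp
  show ?thesis unfolding Qm_def pm_simp Let_def D X e e' by simp
qed

lemma G3: "pm Qm (geod_param (Some 0, None) s) = geod_param (Some (-1), Some 1) s"
proof -
  define E where "E = exp s"
  have E: "E > 0" by (simp add: E_def)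
  have "pm Qm (geod_param (Some 0, None) s) = hpt (of_real ((E^2 - 1)/(1 + E^2))) (2*E/(1+E^2))"
    unfolding geod_up pm_Qm E_def[symmetric] by (simp add: field_simps)
  also have "\<dots> = geod_param (Some (-1), Some 1) s"
    unfolding geod_unit th ch E_def[symmetric] using E by (simp add: field_simps)
  finally show ?thesis .
qed

lemma G4: "pm Qm (geod_param (Some (-1), Some 1) s) = geod_param (Some 0, None) s"
proof -
  define E where "E = exp s"
  have E: "E > 0" by (simp add: E_def)
  define a where "a = (E^2 - 1)/(E^2 + 1)"
  define b where "b = 2*E/(E^2+1)"
  have gu: "geod_param (Some (-1), Some 1) s = hpt (of_real a) b"
    unfolding geod_unit th ch a_def b_def E_def using E by (simp add: field_simps)
  have F: "E^2 + 1 \<noteq> 0" using E by (smt (verit) zero_le_power2)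
  have e1: "a*a - 1 + b^2 = 0" unfolding a_def b_def frac_aux1[OF F] by (simp add: algebra_simps power2_eq_square)
  have n: "(E^2-1-(E^2+1))*(E^2-1-(E^2+1)) + 2*E*(2*E) = 4*(E^2+1)" by algebra
  have e2: "(a - 1)^2 + b^2 = 4 / (E^2+1)" unfolding a_def b_def frac_aux2[OF F] n using four_div[OF F] .
  have c1: "cmod (of_real a - 1) = \<bar>a - 1\<bar>" by (metis norm_of_real of_real_1 of_real_diff)
  have "((of_real a + 1) * cnj (of_real a - 1) + of_real (b^2)) = (of_real (a*a - 1 + b^2) :: complex)"
    by (simp add: algebra_simps)
  then have "pm Qm (hpt (of_real a) b) = hpt 0 (2*b / (4 / (E^2+1)))"
    unfolding pm_Qm c1 e1 power2_abs e2 by simp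
  also have "2*b / (4 / (E^2+1)) = E" unfolding b_def using F by (simp add: field_simps)
  finally show ?thesis unfolding gu geod_up E_def .
qed

definition Sm :: "complex \<Rightarrow> cm" where "Sm d = (exp (-d), 0, 0, exp d)"

lemma Sm_alt: "Sm d = (exp (-d), 0, 0, inverse (exp (-d)))"
  by (simp add: Sm_def exp_minus)

lemma cdet_Sm: "cdet (Sm d) = 1"
  by (simp add: Sm_def cdet_def exp_minus)

lemma good_Sm: "good (pm (Sm d))"
  unfolding Sm_alt by (rule good_pm_sc) simp

lemma pm_Sm: "pm (Sm d) x = sc (exp (-2*d)) x"
proof -
  have "exp (-d) ^ 2 = exp (-2*d)" by (simp add: exp_of_nat_mult[symmetric] power2_eq_square exp_add[symmetric])
  then show ?thesis unfolding Sm_alt by (simp add: pm_sc)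
qed

lemma G1: "pm (Sm d) (geod_param (Some 0, None) s) = geod_param (Some 0, None) (s - 2 * Re d)"
proof -
  have "cmod (exp (-2*d)) = exp (- (2 * Re d))" by (simp add: norm_exp_eq_Re)
  then show ?thesis unfolding pm_Sm geod_up sc_def by (simp add: exp_diff exp_minus divide_inverse mult.commute)
qed

lemma G2: "pm (Sm d) (geod_param (Some (-exp (2*d)), Some (exp (2*d))) s) = geod_param (Some (-1), Some 1) s"
proof -
  have e: "exp (-2*d) * exp (2*d) = 1" by (simp add: exp_add[symmetric])
  have n: "cmod (exp (-2*d)) * cmod (exp (2*d)) = 1" by (metis e norm_mult norm_one)
  have a: "exp (-2*d) * (of_real (tanh s) * exp (2*d)) = of_real (tanh s)"
    by (metis e mult.left_commute mult_1_right)
  have b: "cmod (exp (-2*d)) * (cmod (exp (2*d)) / cosh s) = 1 / cosh s"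
    by (metis n times_divide_eq_right mult.assoc)
  show ?thesis unfolding pm_Sm geod_sym[OF exp_not_eq_zero] geod_unit sc_def zc_hpt hpt_nth a b ..
qed

definition Mn :: "complex \<Rightarrow> cm" where "Mn d = mmul Qm (Sm d)"

lemma cdet_Mn: "cdet (Mn d) = 1"
  by (simp add: Mn_def cdet_mmul cdet_Qm cdet_Sm)

lemma good_Mn: "good (pm (Mn d))"
  unfolding Mn_def by (rule good_pm_mul[OF cdet_Qm cdet_Sm good_Qm good_Sm])

lemma pm_Mn: "x \<in> H3 \<Longrightarrow> pm (Mn d) x = pm Qm (pm (Sm d) x)"
  unfolding Mn_def by (simp add: pm_comp[OF cdet_Qm cdet_Sm])

lemma geod_up_H3: "geod_param (Some 0, None) s \<in> H3"
  by (simp add: geod_up)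

lemma geod_sym_H3: "z \<noteq> 0 \<Longrightarrow> geod_param (Some (-z), Some z) s \<in> H3"
  by (simp add: geod_sym)

lemma Mn_up: "pm (Mn d) (geod_param (Some 0, None) s) = geod_param (Some (-1), Some 1) (s - 2 * Re d)"
  by (simp add: pm_Mn[OF geod_up_H3] G1 G3)

lemma Mn_sym: "pm (Mn d) (geod_param (Some (-exp (2*d)), Some (exp (2*d))) s) = geod_param (Some 0, None) s"
  by (simp add: pm_Mn[OF geod_sym_H3[OF exp_not_eq_zero]] G2 G4)

lemma det_sg: "det (matrix sg) = -1"
  by (simp add: det_3 matrix_def sg_def axis_nth3)

lemma nsq: "(norm (u - hpt w h))^2 = (u$1 - Re w)^2 + (u$2 - Im w)^2 + (u$3 - h)^2"
  unfolding power2_norm_eq_inner by (simp add: inner_vec_def sum_3 power2_eq_square)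

lemma dd:
  fixes u v :: "real^3" and A B :: real
  assumes u3: "u$3 > 0" and v3: "v$3 > 0" and A: "A \<noteq> 0" and AB: "A^2 + B^2 = 1"
    and e1: "(norm (u - hpt 0 1))^2 / u$3 = (norm (v - hpt 0 1))^2 / v$3"
    and e2: "(norm (u - hpt 0 2))^2 / u$3 = (norm (v - hpt 0 2))^2 / v$3"
    and e3: "(norm (u - hpt (of_real A) B))^2 / u$3 = (norm (v - hpt (of_real A) B))^2 / v$3"
  shows "v = u \<or> v = sg u"
proof -
  define u1 u2 t v1 v2 s where "u1 = u$1" "u2 = u$2" "t = u$3" "v1 = v$1" "v2 = v$2" "s = v$3"
  note defs = this
  have t: "t > 0" and s: "s > 0" using u3 v3 defs by auto
  have f1: "(u1^2 + u2^2 + (t - 1)^2) * s = (v1^2 + v2^2 + (s - 1)^2) * t"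
    using e1 t s unfolding nsq defs[symmetric] by (simp add: field_simps)
  have f2: "(u1^2 + u2^2 + (t - 2)^2) * s = (v1^2 + v2^2 + (s - 2)^2) * t"
    using e2 t s unfolding nsq defs[symmetric] by (simp add: field_simps)
  have f3: "((u1 - A)^2 + u2^2 + (t - B)^2) * s = ((v1 - A)^2 + v2^2 + (s - B)^2) * t"
    using e3 t s unfolding nsq defs[symmetric] by (simp add: field_simps)
  have ts: "t = s" using f1 f2 by algebra
  have "(u1^2 + u2^2 + t^2 + 1) * t = (v1^2 + v2^2 + t^2 + 1) * t" using f1 unfolding ts by algebra
  then have N: "u1^2 + u2^2 = v1^2 + v2^2" using t by simp
  have "A * u1 * t = A * v1 * t" using f3 N AB unfolding ts by algebra
  then have "u1 = v1" using t A by simp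
  then have "u2^2 = v2^2" using N by simp
  then have "v2 = u2 \<or> v2 = - u2" by (metis power2_eq_iff)
  then show ?thesis
  proof
    assume "v2 = u2" then have "v = u" using \<open>u1 = v1\<close> ts by (simp add: vec_eq_iff forall_3 defs)
    then show ?thesis ..
  next
    assume "v2 = - u2" then have "v = sg u" using \<open>u1 = v1\<close> ts by (simp add: vec_eq_iff forall_3 defs sg_def)
    then show ?thesis ..
  qed
qed

lemma good_cont: "good f \<Longrightarrow> x \<in> H3 \<Longrightarrow> isCont f x"
  unfolding good_def by (meson has_derivative_continuous)

lemma refl_contra:
  assumes gf: "good f" and gg: "good g" and x: "x \<in> H3"
    and alt: "\<forall>y\<in>H3. g y = f y \<or> g y = sg (f y)"
    and gx: "g x \<noteq> f x"
  shows False
proof -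
  have c: "isCont (\<lambda>y. g y - f y) x" using good_cont[OF gf x] good_cont[OF gg x] by (intro continuous_intros)
  obtain e1 where e1: "e1 > 0" "\<forall>y. dist x y < e1 \<longrightarrow> g y - f y \<noteq> 0"
    using continuous_at_avoid[OF c, of 0] gx by auto
  obtain e2 where e2: "e2 > 0" "ball x e2 \<subseteq> H3" using open_H3 x open_contains_ball by blast
  define e where "e = min e1 e2"
  have e: "e > 0" using e1 e2 by (simp add: e_def)
  obtain Df where Df: "(f has_derivative Df) (at x)" "det (matrix Df) > 0" using gf x by (auto simp: good_def)
  obtain Dg where Dg: "(g has_derivative Dg) (at x)" "det (matrix Dg) > 0" using gg x by (auto simp: good_def)
  have "((sg \<circ> f) has_derivative (sg \<circ> Df)) (at x)"
    using has_derivative_compose[OF Df(1) linear_imp_has_derivative[OF sg_linear]] by (simp add: o_def)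
  then have "(g has_derivative (sg \<circ> Df)) (at x)"
  proof (rule has_derivative_transform_within[OF _ e])
    show "x \<in> UNIV" by simp
    fix y :: "real^3" assume "dist y x < e"
    then have "dist x y < e1" "y \<in> H3" using e2 by (auto simp: e_def dist_commute)
    then show "(sg \<circ> f) y = g y" using e1 alt by fastforce
  qed
  then have "Dg = sg \<circ> Df" using Dg(1) has_derivative_unique by blast
  moreover have "matrix (sg \<circ> Df) = matrix sg ** matrix Df"
    using Df(1) by (intro matrix_compose sg_linear) (auto dest: has_derivative_linear)
  ultimately have "det (matrix Dg) = - det (matrix Df)" by (simp add: det_mul det_sg)
  then show False using Df(2) Dg(2) by simp
qed

lemma tanh1: "tanh (1::real) \<noteq> 0" "(tanh (1::real))^2 + (1 / cosh 1)^2 = 1"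
proof -
  show "tanh (1::real) \<noteq> 0" by simp
  have "cosh (1::real) \<noteq> 0" by (metis cosh_real_pos less_irrefl)
  have "(tanh (1::real))^2 + (1 / cosh 1)^2 = ((sinh 1)^2 + 1) / (cosh 1)^2"
    by (simp add: tanh_def power_divide add_divide_distrib)
  also have "\<dots> = 1" using \<open>cosh (1::real) \<noteq> 0\<close> by (simp add: cosh_square_eq[symmetric])
  finally show "(tanh (1::real))^2 + (1 / cosh 1)^2 = 1" .
qed

lemma cancel_c: "(c::real) \<noteq> 0 \<Longrightarrow> X / (a * c) = Y / (b * c) \<Longrightarrow> X / a = Y / b"
  by (metis divide_cancel_right divide_divide_eq_left)

lemma rigid:
  assumes gf: "good f" and gg: "good g"
    and agree: "\<And>y. y \<in> {hpt 0 1, hpt 0 2, hpt (of_real (tanh 1)) (1 / cosh 1)} \<Longrightarrow> \<exists>p\<in>H3. f p = y \<and> g p = y"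
    and x: "x \<in> H3"
  shows "f x = g x"
proof -
  have alt: "g y = f y \<or> g y = sg (f y)" if y: "y \<in> H3" for y
  proof -
    have fy: "f y \<in> H3" and gy: "g y \<in> H3" using gf gg y by (auto simp: good_def)
    have key: "(norm (f y - q))^2 / (f y $ 3) = (norm (g y - q))^2 / (g y $ 3)"
      if q: "q \<in> {hpt 0 1, hpt 0 2, hpt (of_real (tanh 1)) (1 / cosh 1)}" for q
    proof -
      obtain p where p: "p \<in> H3" "f p = q" "g p = q" using agree[OF q] by blast
      have qH: "q \<in> H3" using q by (auto simp: cosh_real_pos)
      have "hdist (f y) q = hdist (g y) q"
        using gf gg y p by (metis good_def)
      then have "(norm (f y - q))^2 / ((f y $ 3) * (q $ 3)) = (norm (g y - q))^2 / ((g y $ 3) * (q $ 3))"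
        using hdist_eq_imp[OF fy qH gy qH] by blast
      moreover have "q $ 3 > 0" using qH by (simp add: H3_def)
      ultimately show ?thesis by (metis cancel_c less_irrefl)
    qed
    have "g y = f y \<or> g y = sg (f y)"
      by (rule dd[OF _ _ tanh1]) (use fy gy key in \<open>auto simp: H3_def\<close>)
    then show ?thesis .
  qed
  show ?thesis
  proof (rule ccontr)
    assume "f x \<noteq> g x"
    then show False using refl_contra[OF gf gg x] alt by auto
  qed
qed

lemma good_oi: "orient_isom f \<Longrightarrow> good f"
  unfolding orient_isom_def good_def bij_betw_def by auto

lemma geod_H3: "valid_ogeod L \<Longrightarrow> geod_param L s \<in> H3"
proof (cases L)
  case (Pair u v)
  assume "valid_ogeod L"
  then have uv: "u \<noteq> v" by (simp add: Pair valid_ogeod_def)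
  show ?thesis
  proof (cases u; cases v)
    fix a b assume "u = Some a" "v = Some b"
    then have "a \<noteq> b" using uv by simp
    then have "cmod (b - a) / 2 / cosh s > 0" by (simp add: cosh_real_pos)
    then show ?thesis using \<open>u = Some a\<close> \<open>v = Some b\<close> by (simp add: Pair geod_param_def Let_def)
  qed (use uv in \<open>auto simp: Pair geod_param_def\<close>)
qed

lemma meet_target: "geod_param (Some 0, None) a = geod_param (Some (-1), Some 1) b \<Longrightarrow> a = 0 \<and> b = 0"
proof -
  assume "geod_param (Some 0, None) a = geod_param (Some (-1), Some 1) b"
  then have h: "0 = (of_real (tanh b) :: complex)" "exp a = 1 / cosh b" unfolding geod_up geod_unit hpt_eq_iff by auto
  then have "b = 0" by simp
  then show ?thesis using h by simp
qed

lemma step: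
  fixes A B :: ogeod and d :: complex and eta eta' :: "real^3 \<Rightarrow> real^3"
  assumes oi1: "orient_isom eta" and oi2: "orient_isom eta'"
    and vA: "valid_ogeod A" and vB: "valid_ogeod B"
    and m1: "maps_ogeod eta A (Some 0, None)"
    and m2: "maps_ogeod eta B (Some (-exp (2*d)), Some (exp (2*d)))"
    and m3: "maps_ogeod eta' B (Some 0, None)"
    and m4: "maps_ogeod eta' A (Some (-1), Some 1)"
    and meet: "geod_param A s1 = geod_param B s2"
    and x: "x \<in> H3"
  shows "eta' x = pm (Mn d) (eta x)"
proof -
  have gf: "good eta'" using oi2 by (rule good_oi)
  have gg: "good (pm (Mn d) \<circ> eta)" using good_comp[OF good_Mn good_oi[OF oi1]] .
  obtain c4 where c4: "\<And>s. eta (geod_param A s) = geod_param (Some 0, None) (s + c4)" using m1 by (auto simp: maps_ogeod_def)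
  obtain c2 where c2: "\<And>s. eta (geod_param B s) = geod_param (Some (-exp (2*d)), Some (exp (2*d))) (s + c2)" using m2 by (auto simp: maps_ogeod_def)
  obtain c1 where c1: "\<And>s. eta' (geod_param B s) = geod_param (Some 0, None) (s + c1)" using m3 by (auto simp: maps_ogeod_def)
  obtain c3 where c3: "\<And>s. eta' (geod_param A s) = geod_param (Some (-1), Some 1) (s + c3)" using m4 by (auto simp: maps_ogeod_def)
  have gB: "(pm (Mn d) \<circ> eta) (geod_param B s) = geod_param (Some 0, None) (s + c2)" for s
    by (simp add: c2 Mn_sym)
  have gA: "(pm (Mn d) \<circ> eta) (geod_param A s) = geod_param (Some (-1), Some 1) (s + c4 - 2 * Re d)" for s
    by (simp add: c4 Mn_up)
  have "geod_param (Some 0, None) (s2 + c1) = geod_param (Some (-1), Some 1) (s1 + c3)"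
    using c1[of s2] c3[of s1] meet by simp
  then have e1: "s2 + c1 = 0" "s1 + c3 = 0" using meet_target by blast+
  have "geod_param (Some 0, None) (s2 + c2) = geod_param (Some (-1), Some 1) (s1 + c4 - 2 * Re d)"
    using gB[of s2] gA[of s1] meet by simp
  then have e2: "s2 + c2 = 0" "s1 + c4 - 2 * Re d = 0" using meet_target by blast+
  have cc: "c2 = c1" "c4 - 2 * Re d = c3" using e1 e2 by linarith+
  have "eta' x = (pm (Mn d) \<circ> eta) x"
  proof (rule rigid[OF gf gg _ x])
    fix y assume "y \<in> {hpt 0 1, hpt 0 2, hpt (of_real (tanh 1)) (1 / cosh 1)}"
    then consider "y = geod_param (Some 0, None) 0" | "y = geod_param (Some 0, None) (ln 2)" | "y = geod_param (Some (-1), Some 1) 1"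
      by (auto simp: geod_up geod_unit)
    then show "\<exists>p\<in>H3. eta' p = y \<and> (pm (Mn d) \<circ> eta) p = y"
    proof cases
      case 1
      show ?thesis using e1 e2 c1[of "0 - c1"] gB[of "0 - c1"] geod_H3[OF vB] 1 cc
        by (intro bexI[of _ "geod_param B (0 - c1)"]) auto
    next
      case 2
      show ?thesis using e1 e2 c1[of "ln 2 - c1"] gB[of "ln 2 - c1"] geod_H3[OF vB] 2 cc
        by (intro bexI[of _ "geod_param B (ln 2 - c1)"]) auto
    next
      case 3
      show ?thesis using e1 e2 c3[of "1 - c3"] gA[of "1 - c3"] geod_H3[OF vA] 3 cc
        by (intro bexI[of _ "geod_param A (1 - c3)"]) (auto simp: algebra_simps)
    qed
  qed
  then show ?thesis by simp
qed

lemma adj_lemma: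
  fixes x1 x2 x3 x4 y1 y2 y3 y4 e :: complex
  assumes "y1*y4 - y2*y3 = 1" "mmul (y1,y2,y3,y4) (x1,x2,x3,x4) = (e,0,0,e)"
  shows "x1 = e*y4 \<and> x2 = -e*y2 \<and> x3 = -e*y3 \<and> x4 = e*y1"
  using assms unfolding mmul_def by simp algebra

lemma qq2: "qq * qq = -1/2"
  by (simp add: qq_def field_simps flip: of_real_mult)

lemma Mn_expl: "Mn d = (qq * exp (-d), qq * exp d, qq * exp (-d), - qq * exp d)"
  by (simp add: Mn_def Qm_def Sm_def mmul_def)

lemma ch_e: "cosh (x::complex) = (exp x + exp (-x)) / 2" by (simp add: cosh_def scaleR_conv_of_real)
lemma sh_e: "sinh (x::complex) = (exp x - exp (-x)) / 2" by (simp add: sinh_def scaleR_conv_of_real)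

lemma cancel2: assumes "(c::complex) \<noteq> 0" "L = c*P" "M = - c*Q" "L = e*M" shows "P = -e*Q"
proof -
  have "c * P = c * (-e*Q)" using assms(2-4) by (simp add: ac_simps)
  then show ?thesis using assms(1) by (metis mult_cancel_left)
qed

lemma fin_poly:
  fixes q e E1 E2 E3 E4 E5 E6 F1 F2 F3 F4 F5 F6 :: complex
  assumes q: "q*q = -1/2"
    and E: "E1*F1 = 1" "E2*F2 = 1" "E3*F3 = 1" "E4*F4 = 1" "E5*F5 = 1" "E6*F6 = 1"
    and X: "mmul (mmul (q*F6, q*E6, q*F6, -q*E6) (mmul (q*F5, q*E5, q*F5, -q*E5) (q*F4, q*E4, q*F4, -q*E4)))
                 (mmul (q*F3, q*E3, q*F3, -q*E3) (mmul (q*F2, q*E2, q*F2, -q*E2) (q*F1, q*E1, q*F1, -q*E1))) = (e,0,0,e)"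
  shows "((E1*E3 + F1*F3)/2) * ((E2+F2)/2) = (-e) * ((E4*E6 + F4*F6)/2) * ((E5+F5)/2)
     \<and> - ((E1*E3 - F1*F3)/2) * ((E2+F2)/2) = (-e) * ((E4*F6 + F4*E6)/2) * ((E5-F5)/2)
     \<and> - ((E1*F3 + F1*E3)/2) * ((E2-F2)/2) = (-e) * ((E4*E6 - F4*F6)/2) * ((E5+F5)/2)
     \<and> ((E1*F3 - F1*E3)/2) * ((E2-F2)/2) = (-e) * ((E4*F6 - F4*E6)/2) * ((E5-F5)/2)"
proof -
  obtain y1 y2 y3 y4 where Y: "mmul (q*F6, q*E6, q*F6, -q*E6) (mmul (q*F5, q*E5, q*F5, -q*E5) (q*F4, q*E4, q*F4, -q*E4)) = (y1,y2,y3,y4)"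
    by (metis prod_cases4)
  obtain x1 x2 x3 x4 where XX: "mmul (q*F3, q*E3, q*F3, -q*E3) (mmul (q*F2, q*E2, q*F2, -q*E2) (q*F1, q*E1, q*F1, -q*E1)) = (x1,x2,x3,x4)"
    by (metis prod_cases4)
  have dY: "y1*y4 - y2*y3 = 1"
  proof -
    have "cdet (y1,y2,y3,y4) = 1" unfolding Y[symmetric] cdet_mmul using q E(4-6) by (simp add: cdet_def)
    then show ?thesis by (simp add: cdet_def)
  qed
  have r: "x1 = e*y4 \<and> x2 = -e*y2 \<and> x3 = -e*y3 \<and> x4 = e*y1"
    by (rule adj_lemma[OF dY]) (use X Y XX in simp)
  have xe: "x1 = q * F3 * (q * F2 * (q * F1) + q * E2 * (q * F1)) + q * E3 * (q * F2 * (q * F1) - q * E2 * (q * F1))" "x2 = q * F3 * (q * F2 * (q * E1) - q * E2 * (q * E1)) + q * E3 * (q * F2 * (q * E1) + q * E2 * (q * E1))" "x3 = q * F3 * (q * F2 * (q * F1) + q * E2 * (q * F1)) - q * E3 * (q * F2 * (q * F1) - q * E2 * (q * F1))" "x4 = q * F3 * (q * F2 * (q * E1) - q * E2 * (q * E1)) - q * E3 * (q * F2 * (q * E1) + q * E2 * (q * E1))"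
    using XX unfolding mmul_def by auto
  have ye: "y1 = q * F6 * (q * F5 * (q * F4) + q * E5 * (q * F4)) + q * E6 * (q * F5 * (q * F4) - q * E5 * (q * F4))" "y2 = q * F6 * (q * F5 * (q * E4) - q * E5 * (q * E4)) + q * E6 * (q * F5 * (q * E4) + q * E5 * (q * E4))" "y3 = q * F6 * (q * F5 * (q * F4) + q * E5 * (q * F4)) - q * E6 * (q * F5 * (q * F4) - q * E5 * (q * F4))" "y4 = q * F6 * (q * F5 * (q * E4) - q * E5 * (q * E4)) - q * E6 * (q * F5 * (q * E4) + q * E5 * (q * E4))"
    using Y unfolding mmul_def by auto
  have xs1: "x1 + x2 + x3 - x4 = 2*q*q*q * ((E1*E3 + F1*F3) * (E2+F2))" unfolding xe by algebra
  have xs2: "x1 - x2 + x3 + x4 = 2*q*q*q * (- (E1*E3 - F1*F3) * (E2+F2))" unfolding xe by algebra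
  have xs3: "x1 + x2 - x3 + x4 = 2*q*q*q * (- (E1*F3 + F1*E3) * (E2-F2))" unfolding xe by algebra
  have xs4: "x1 - x2 - x3 - x4 = 2*q*q*q * ((E1*F3 - F1*E3) * (E2-F2))" unfolding xe by algebra
  have ys1: "y4 - y2 - y3 - y1 = - (2*q*q*q) * ((E4*E6 + F4*F6) * (E5+F5))" unfolding ye by algebra
  have ys2: "y4 + y2 - y3 + y1 = - (2*q*q*q) * ((E4*F6 + F4*E6) * (E5-F5))" unfolding ye by algebra
  have ys3: "y4 - y2 + y3 + y1 = - (2*q*q*q) * ((E4*E6 - F4*F6) * (E5+F5))" unfolding ye by algebra
  have ys4: "y4 + y2 + y3 - y1 = - (2*q*q*q) * ((E4*F6 - F4*E6) * (E5-F5))" unfolding ye by algebra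
  have q0: "8*q*q*q \<noteq> 0" using q by auto
  have l: "x1 + x2 + x3 - x4 = e * (y4 - y2 - y3 - y1)" "x1 - x2 + x3 + x4 = e * (y4 + y2 - y3 + y1)"
    "x1 + x2 - x3 + x4 = e * (y4 - y2 + y3 + y1)" "x1 - x2 - x3 - x4 = e * (y4 + y2 + y3 - y1)"
    using r by (simp_all add: algebra_simps)
  have c0: "2*q*q*q \<noteq> 0" using q0 by simp
  have p1: "(E1*E3 + F1*F3) * (E2+F2) = -e * ((E4*E6 + F4*F6) * (E5+F5))"
    by (rule cancel2[OF c0 xs1 ys1 l(1)])
  have p2: "- (E1*E3 - F1*F3) * (E2+F2) = -e * ((E4*F6 + F4*E6) * (E5-F5))"
    by (rule cancel2[OF c0 xs2 ys2 l(2)])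
  have p3: "- (E1*F3 + F1*E3) * (E2-F2) = -e * ((E4*E6 - F4*F6) * (E5+F5))"
    by (rule cancel2[OF c0 xs3 ys3 l(3)])
  have p4: "(E1*F3 - F1*E3) * (E2-F2) = -e * ((E4*F6 - F4*E6) * (E5-F5))"
    by (rule cancel2[OF c0 xs4 ys4 l(4)])
  have g1: "\<And>a b c d. a*b = -e*(c*d) \<Longrightarrow> (a/2)*(b/2) = -e*(c/2)*(d/2)" by (simp add: field_simps)
  have g2: "\<And>a b c d. -a*b = -e*(c*d) \<Longrightarrow> -(a/2)*(b/2) = -e*(c/2)*(d/2)" by (simp add: field_simps)
  show ?thesis using g1[OF p1] g2[OF p2] g2[OF p3] g1[OF p4] by blast
qed

lemma mmul_assoc: "mmul A (mmul B C) = mmul (mmul A B) C"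
  by (cases A; cases B; cases C) (simp add: mmul_def algebra_simps)

lemma exp_rules: "exp (a + b) = exp a * exp b" "exp (-(a+b)) = exp (-a) * exp (-b)"
  "exp (a - b) = exp a * exp (-b)" "exp (-(a-b)) = exp (-a) * exp b" for a b :: complex
  by (simp_all add: exp_add[symmetric])

lemma hyp_rules:
  fixes a b :: complex
  shows "cosh (a + b) = (exp a * exp b + exp (-a) * exp (-b)) / 2"
    "sinh (a + b) = (exp a * exp b - exp (-a) * exp (-b)) / 2"
    "cosh (a - b) = (exp a * exp (-b) + exp (-a) * exp b) / 2"
    "sinh (a - b) = (exp a * exp (-b) - exp (-a) * exp b) / 2"
    "cosh a = (exp a + exp (-a)) / 2" "sinh a = (exp a - exp (-a)) / 2"
  by (simp_all only: ch_e sh_e exp_rules)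

theorem theorem7p9:
  fixes L :: "nat \<Rightarrow> ogeod" and \<delta> :: "nat \<Rightarrow> complex"
  assumes "ra_hexagon L"
    and "\<forall>n\<in>{1..6}. half_side_length L n (\<delta> n)"
  shows "\<exists>\<epsilon>::complex. \<epsilon> \<in> {1, -1} \<and>
    cosh (\<delta> 1 + \<delta> 3) * cosh (\<delta> 2) = \<epsilon> * cosh (\<delta> 4 + \<delta> 6) * cosh (\<delta> 5) \<and>
    - sinh (\<delta> 1 + \<delta> 3) * cosh (\<delta> 2) = \<epsilon> * cosh (\<delta> 4 - \<delta> 6) * sinh (\<delta> 5) \<and>
    - cosh (\<delta> 1 - \<delta> 3) * sinh (\<delta> 2) = \<epsilon> * sinh (\<delta> 4 + \<delta> 6) * cosh (\<delta> 5) \<and>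
    sinh (\<delta> 1 - \<delta> 3) * sinh (\<delta> 2) = \<epsilon> * sinh (\<delta> 4 - \<delta> 6) * sinh (\<delta> 5)"
proof -
  have per: "\<And>n. L (n + 6) = L n" and val: "\<And>n. valid_ogeod (L n)"
    and pmt: "\<And>n. perp_meet (L n) (L (n + 1))"
    using assms(1) by (auto simp: ra_hexagon_def)
  have "\<forall>n\<in>{1..6}. \<exists>eta. orient_isom eta \<and> maps_ogeod eta (L n) (Some 0, None) \<and>
      maps_ogeod eta (L (n - 1)) (Some (-1), Some 1) \<and>
      maps_ogeod eta (L (n + 1)) (Some (- exp (2 * \<delta> n)), Some (exp (2 * \<delta> n)))"
  proof
    fix n :: nat assume n: "n \<in> {1..6}"
    obtain e z where ez: "orient_isom e" "maps_ogeod e (L n) (Some 0, None)"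
      "maps_ogeod e (L (n - 1)) (Some (-1), Some 1)" "maps_ogeod e (L (n + 1)) (Some (-z), Some z)"
      "exp (2 * \<delta> n) = z"
      using assms(2) n unfolding half_side_length_def by blast
    show "\<exists>eta. orient_isom eta \<and> maps_ogeod eta (L n) (Some 0, None) \<and>
      maps_ogeod eta (L (n - 1)) (Some (-1), Some 1) \<and>
      maps_ogeod eta (L (n + 1)) (Some (- exp (2 * \<delta> n)), Some (exp (2 * \<delta> n)))"
      using ez by blast
  qed
  then have "\<exists>eta. \<forall>n\<in>{1..6}. orient_isom (eta n) \<and> maps_ogeod (eta n) (L n) (Some 0, None) \<and>
      maps_ogeod (eta n) (L (n - 1)) (Some (-1), Some 1) \<and>
      maps_ogeod (eta n) (L (n + 1)) (Some (- exp (2 * \<delta> n)), Some (exp (2 * \<delta> n)))"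
    by (rule bchoice)
  then obtain eta where etaA: "\<forall>n\<in>{1..6}. orient_isom (eta n) \<and> maps_ogeod (eta n) (L n) (Some 0, None) \<and>
      maps_ogeod (eta n) (L (n - 1)) (Some (-1), Some 1) \<and>
      maps_ogeod (eta n) (L (n + 1)) (Some (- exp (2 * \<delta> n)), Some (exp (2 * \<delta> n)))"
    by (elim exE)
  have eta: "orient_isom (eta n) \<and> maps_ogeod (eta n) (L n) (Some 0, None) \<and>
      maps_ogeod (eta n) (L (n - 1)) (Some (-1), Some 1) \<and>
      maps_ogeod (eta n) (L (n + 1)) (Some (- exp (2 * \<delta> n)), Some (exp (2 * \<delta> n)))"
    if "n \<in> {1..6}" for n
    by (rule bspec[OF etaA that])
  have meet: "\<exists>s1 s2. geod_param (L n) s1 = geod_param (L (n+1)) s2" for n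
    using pmt[of n] unfolding perp_meet_def by blast
  have st: "eta (n+1) x = pm (Mn (\<delta> n)) (eta n x)" if n: "n \<in> {1..5}" and x: "x \<in> H3" for n x
  proof -
    obtain s1 s2 where m: "geod_param (L n) s1 = geod_param (L (n+1)) s2" using meet by blast
    have e1: "orient_isom (eta n) \<and> maps_ogeod (eta n) (L n) (Some 0, None) \<and>
      maps_ogeod (eta n) (L (n + 1)) (Some (- exp (2 * \<delta> n)), Some (exp (2 * \<delta> n)))"
      using eta[of n] n by auto
    have e2: "orient_isom (eta (n+1)) \<and> maps_ogeod (eta (n+1)) (L (n+1)) (Some 0, None) \<and>
      maps_ogeod (eta (n+1)) (L n) (Some (-1), Some 1)"
      using eta[of "n+1"] n by auto
    show ?thesis using step[OF _ _ val val _ _ _ _ m x] e1 e2 by blast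
  qed
  have st6: "eta 1 x = pm (Mn (\<delta> 6)) (eta 6 x)" if x: "x \<in> H3" for x
  proof -
    have L7: "L 7 = L 1" using per[of 1] by simp
    have L0: "L 0 = L 6" using per[of 0] by simp
    obtain s1 s2 where m: "geod_param (L 6) s1 = geod_param (L 1) s2" using meet[of 6] L7 by auto
    have e1: "orient_isom (eta 6) \<and> maps_ogeod (eta 6) (L 6) (Some 0, None) \<and>
      maps_ogeod (eta 6) (L 1) (Some (- exp (2 * \<delta> 6)), Some (exp (2 * \<delta> 6)))"
      using eta[of 6] L7 by auto
    have e2: "orient_isom (eta 1) \<and> maps_ogeod (eta 1) (L 1) (Some 0, None) \<and>
      maps_ogeod (eta 1) (L 6) (Some (-1), Some 1)"
      using eta[of 1] L0 by auto
    show ?thesis using step[OF _ _ val val _ _ _ _ m x] e1 e2 by blast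
  qed
  have H3n: "eta n x \<in> H3" if "n \<in> {1..6}" "x \<in> H3" for n x
    using eta[of n] that good_oi unfolding good_def by blast
  define M1 where "M1 = Mn (\<delta> 1)"
  define M2 where "M2 = Mn (\<delta> 2)"
  define M3 where "M3 = Mn (\<delta> 3)"
  define M4 where "M4 = Mn (\<delta> 4)"
  define M5 where "M5 = Mn (\<delta> 5)"
  define M6 where "M6 = Mn (\<delta> 6)"
  note Ms = M1_def M2_def M3_def M4_def M5_def M6_def
  have cd: "cdet M1 = 1" "cdet M2 = 1" "cdet M3 = 1" "cdet M4 = 1" "cdet M5 = 1" "cdet M6 = 1"
    by (simp_all add: Ms cdet_Mn)
  define X where "X = mmul M3 (mmul M2 M1)"
  define Y where "Y = mmul M6 (mmul M5 M4)"
  define P where "P = mmul Y X"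
  have cdX: "cdet X = 1" by (simp add: X_def cdet_mmul cd)
  have chain: "pm M6 (pm M5 (pm M4 (pm M3 (pm M2 (pm M1 y))))) = pm P y" if y: "y \<in> H3" for y
  proof -
    have a: "pm M3 (pm M2 (pm M1 y)) = pm X y"
      using y by (simp add: X_def pm_comp cd cdet_mmul pm_H3)
    have "pm M6 (pm M5 (pm M4 (pm X y))) = pm (mmul M6 (mmul M5 (mmul M4 X))) y"
      using y cdX by (simp add: pm_comp cd cdet_mmul pm_H3)
    also have "mmul M6 (mmul M5 (mmul M4 X)) = P" by (simp add: P_def Y_def mmul_assoc)
    finally show ?thesis using a by simp
  qed
  have fixP: "pm P y = y" if y: "y \<in> H3" for y
  proof -
    have "bij_betw (eta 1) H3 H3" using eta[of 1] by (auto simp: orient_isom_def)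
    then obtain x where x: "x \<in> H3" "eta 1 x = y" using y by (metis bij_betw_def imageE)
    have nn: "(1::nat)+1 = 2" "(2::nat)+1 = 3" "(3::nat)+1 = 4" "(4::nat)+1 = 5" "(5::nat)+1 = 6" by simp_all
    have h: "eta 2 x = pm M1 (eta 1 x)" "eta 3 x = pm M2 (eta 2 x)" "eta 4 x = pm M3 (eta 3 x)"
      "eta 5 x = pm M4 (eta 4 x)" "eta 6 x = pm M5 (eta 5 x)"
      unfolding Ms
      by (rule st[of 1 x, unfolded nn(1)] st[of 2 x, unfolded nn(2)] st[of 3 x, unfolded nn(3)]
          st[of 4 x, unfolded nn(4)] st[of 5 x, unfolded nn(5)]; use x(1) in simp)+
    have "eta 1 x = pm M6 (eta 6 x)" using st6 x(1) by (simp add: Ms)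
    also have "\<dots> = pm M6 (pm M5 (pm M4 (pm M3 (pm M2 (pm M1 (eta 1 x))))))" by (simp only: h)
    finally have "eta 1 x = pm M6 (pm M5 (pm M4 (pm M3 (pm M2 (pm M1 (eta 1 x))))))" .
    then show ?thesis using chain[of "eta 1 x"] x H3n by simp
  qed
  have "cdet P = 1" by (simp add: P_def Y_def cdet_mmul cdX cd)
  then have "P = (1,0,0,1) \<or> P = (-1,0,0,-1)" using pm_id fixP by blast
  then obtain e :: complex where e: "e \<in> {1, -1}" "P = (e,0,0,e)" by auto
  have ex: "exp (\<delta> k) * exp (- \<delta> k) = 1" for k by (simp add: exp_add[symmetric])
  have hyp: "mmul (mmul (qq * exp (- \<delta> 6), qq * exp (\<delta> 6), qq * exp (- \<delta> 6), - qq * exp (\<delta> 6))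
        (mmul (qq * exp (- \<delta> 5), qq * exp (\<delta> 5), qq * exp (- \<delta> 5), - qq * exp (\<delta> 5))
              (qq * exp (- \<delta> 4), qq * exp (\<delta> 4), qq * exp (- \<delta> 4), - qq * exp (\<delta> 4))))
     (mmul (qq * exp (- \<delta> 3), qq * exp (\<delta> 3), qq * exp (- \<delta> 3), - qq * exp (\<delta> 3))
        (mmul (qq * exp (- \<delta> 2), qq * exp (\<delta> 2), qq * exp (- \<delta> 2), - qq * exp (\<delta> 2))
              (qq * exp (- \<delta> 1), qq * exp (\<delta> 1), qq * exp (- \<delta> 1), - qq * exp (\<delta> 1)))) = (e,0,0,e)"
    using e(2) unfolding P_def X_def Y_def Ms Mn_expl .
  note fp = fin_poly[OF qq2 ex ex ex ex ex ex hyp]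
  show ?thesis
  proof (intro exI[of _ "-e"] conjI)
    show "-e \<in> {1, -1}" using e(1) by auto
    show "cosh (\<delta> 1 + \<delta> 3) * cosh (\<delta> 2) = - e * cosh (\<delta> 4 + \<delta> 6) * cosh (\<delta> 5)"
      unfolding ch_e sh_e exp_rules using fp by blast
    show "- sinh (\<delta> 1 + \<delta> 3) * cosh (\<delta> 2) = - e * cosh (\<delta> 4 - \<delta> 6) * sinh (\<delta> 5)"
      unfolding ch_e sh_e exp_rules using fp by blast
    show "- cosh (\<delta> 1 - \<delta> 3) * sinh (\<delta> 2) = - e * sinh (\<delta> 4 + \<delta> 6) * cosh (\<delta> 5)"
      unfolding ch_e sh_e exp_rules using fp by blast
    show "sinh (\<delta> 1 - \<delta> 3) * sinh (\<delta> 2) = - e * sinh (\<delta> 4 - \<delta> 6) * sinh (\<delta> 5)"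
      unfolding ch_e sh_e exp_rules using fp by blast
  qed
qed

end
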